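(* Let $\mathcal{M}$ be a complete Riemannian submanifold of $\mathbb{R}^n$ with the induced Riemannian metric, $f:\mathbb{R}^n\to\mathbb{R}$ proper lower semicontinuous, $\tilde f$ a smoothing function of $f$, and $R$ a retraction on $\mathcal{M}$. Assume that for every $\bar\mu>0$ and every $\bar x\in\mathcal{M}$ the level set $\{x\in\mathcal{M}:\tilde f(x,\bar\mu)\le\tilde f(\bar x,\bar\mu)\}$ is compact. Let $\{x_\ell\}$ be an infinite sequence generated by the Riemannian smoothing steepest descent method (RSSD) described below with $\delta_{opt}=\mu_{opt}=0$, and let $K=\{\ell:\|\eta_\ell\|\le\delta_\ell\}$. Then $K$ is an infinite set and \[ \lim_{\ell\to\infty,\ \ell\in K}\delta_\ell=0,\qquad \lim_{\ell\to\infty,\ \ell\in K}\mu_\ell=0 . \]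
   Context: Smoothing function: $\tilde f:\mathbb{R}^n\times\mathbb{R}_+\to\mathbb{R}$ with $\tilde f(\cdot,\mu)$ continuously differentiable for each $\mu>0$, $\lim_{z\to x,\mu\downarrow0}\tilde f(z,\mu)=f(x)$, and $|\tilde f(x,\mu)-f(x)|\le\kappa\omega(\mu)$ for some $\kappa>0$, $\omega:(0,\infty)\to(0,\infty)$ with $\omega(\mu)\to0$. Retraction: smooth $R:T\mathcal{M}\to\mathcal{M}$ with $R_x(0_x)=x$ and $dR_x(0_x)=\mathrm{id}_{T_x\mathcal{M}}$, $R_x$ being the restriction to the tangent space $T_x\mathcal{M}$. $\operatorname{grad}\tilde f(x,\mu)=\operatorname{Proj}_{T_x\mathcal{M}}\nabla_x\tilde f(x,\mu)$. RSSD: inputs $x_0\in\mathcal{M}$, $\delta_{opt}\ge0$, $\delta_0>0$, $\mu_{opt}\ge0$, $\mu_0>0$, $\beta\in(0,1)$, $\bar\alpha>0$, $\theta_\delta\in(0,1)$, $\theta_\mu\in(0,1)$, $\sigma\in(0,1)$. For $\ell=0,1,2,\dots$: compute $\eta_\ell=-\operatorname{grad}\tilde f(x_\ell,\mu_\ell)$. If $\|\eta_\ell\|\le\delta_{opt}$ and $\mu_\ell\le\mu_{opt}$, stop. Else if $\|\eta_\ell\|\le\delta_\ell$, set $\mu_{\ell+1}=\theta_\mu\mu_\ell$, $\delta_{\ell+1}=\theta_\delta\delta_\ell$, $x_{\ell+1}=x_\ell$. Otherwise set $\mu_{\ell+1}=\mu_\ell$, $\delta_{\ell+1}=\delta_\ell$,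 let $t_\ell=\beta^m\bar\alpha$ where $m$ is the smallest nonnegative integer with $\tilde f(R_{x_\ell}(\beta^m\bar\alpha\eta_\ell),\mu_\ell)\le\tilde f(x_\ell,\mu_\ell)-\sigma\beta^m\bar\alpha\|\operatorname{grad}\tilde f(x_\ell,\mu_\ell)\|^2$, and set $x_{\ell+1}=R_{x_\ell}(t_\ell\eta_\ell)$. *)

theory Defs
  imports "HOL-Analysis.Analysis"
begin

(* Ambient space R^n is an arbitrary euclidean_space 'a, with its standard inner product. *)

primrec iter_dd :: "'a::euclidean_space list \<Rightarrow> ('a \<Rightarrow> real) \<Rightarrow> 'a \<Rightarrow> real" where
  "iter_dd [] g = g"
| "iter_dd (v # vs) g = (\<lambda>x. frechet_derivative (iter_dd vs g) (at x) v)"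

definition smooth_on :: "'a::euclidean_space set \<Rightarrow> ('a \<Rightarrow> 'b::euclidean_space) \<Rightarrow> bool" where
  "smooth_on U F \<longleftrightarrow> (\<forall>b\<in>Basis. \<forall>vs. set vs \<subseteq> Basis \<longrightarrow>
      iter_dd vs (\<lambda>y. F y \<bullet> b) differentiable_on U)"

definition smooth_map_on :: "'a::euclidean_space set \<Rightarrow> ('a \<Rightarrow> 'b::euclidean_space) \<Rightarrow> bool" where
  "smooth_map_on S F \<longleftrightarrow> (\<forall>p\<in>S. \<exists>U G. open U \<and> p \<in> U \<and> smooth_on U G \<and> (\<forall>x\<in>S \<inter> U. G x = F x))"

definition embedded_submanifold :: "'a::euclidean_space set \<Rightarrow> nat \<Rightarrow> bool" where
  "embedded_submanifold M d \<longleftrightarrow> (\<forall>p\<in>M. \<exists>U V (\<psi>::'a \<Rightarrow> 'a) \<psi>' L.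
      open U \<and> open V \<and> p \<in> U \<and> subspace L \<and> dim L = d \<and>
      smooth_on U \<psi> \<and> smooth_on V \<psi>' \<and>
      (\<forall>x\<in>U. \<psi> x \<in> V \<and> \<psi>' (\<psi> x) = x) \<and> (\<forall>y\<in>V. \<psi>' y \<in> U \<and> \<psi> (\<psi>' y) = y) \<and>
      \<psi> ` (M \<inter> U) = V \<inter> L)"

definition tangent_space :: "'a::euclidean_space set \<Rightarrow> 'a \<Rightarrow> 'a set" where
  "tangent_space M x = {v. \<exists>(\<gamma>::real \<Rightarrow> 'a) e. e > 0 \<and> smooth_on {-e<..<e} \<gamma> \<and>
      (\<forall>t\<in>{-e<..<e}. \<gamma> t \<in> M) \<and> \<gamma> 0 = x \<and> (\<gamma> has_vector_derivative v) (at 0)}"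

definition tangent_bundle :: "'a::euclidean_space set \<Rightarrow> ('a \<times> 'a) set" where
  "tangent_bundle M = {(x, v). x \<in> M \<and> v \<in> tangent_space M x}"

definition curve_length :: "(real \<Rightarrow> 'a::euclidean_space) \<Rightarrow> real" where
  "curve_length \<gamma> = integral {0..1} (\<lambda>t. norm (vector_derivative \<gamma> (at t)))"

definition riem_dist_lt :: "'a::euclidean_space set \<Rightarrow> 'a \<Rightarrow> 'a \<Rightarrow> real \<Rightarrow> bool" where
  "riem_dist_lt M x y e \<longleftrightarrow> (\<exists>\<gamma>. \<gamma> piecewise_C1_differentiable_on {0..1} \<and> \<gamma> ` {0..1} \<subseteq> M \<and>
      \<gamma> 0 = x \<and> \<gamma> 1 = y \<and> curve_length \<gamma> < e)"

definition riem_complete :: "'a::euclidean_space set \<Rightarrow> bool" where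
  "riem_complete M \<longleftrightarrow> (\<forall>X::nat \<Rightarrow> 'a. (\<forall>n. X n \<in> M) \<longrightarrow>
      (\<forall>e>0. \<exists>N. \<forall>m\<ge>N. \<forall>n\<ge>N. riem_dist_lt M (X m) (X n) e) \<longrightarrow>
      (\<exists>x\<in>M. \<forall>e>0. \<exists>N. \<forall>n\<ge>N. riem_dist_lt M (X n) x e))"

definition complete_riemannian_submanifold :: "'a::euclidean_space set \<Rightarrow> bool" where
  "complete_riemannian_submanifold M \<longleftrightarrow> (\<exists>d. embedded_submanifold M d) \<and> riem_complete M"

definition lsc :: "('a::topological_space \<Rightarrow> real) \<Rightarrow> bool" where
  "lsc f \<longleftrightarrow> (\<forall>x. \<forall>c < f x. \<forall>\<^sub>F z in at x. c < f z)"

definition smoothing_function ::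
  "('a::euclidean_space \<Rightarrow> real) \<Rightarrow> ('a \<Rightarrow> real \<Rightarrow> real) \<Rightarrow> ('a \<Rightarrow> real \<Rightarrow> 'a) \<Rightarrow> bool" where
  "smoothing_function f ft gradf \<longleftrightarrow>
     (\<forall>\<mu>>0. (\<forall>x. ((\<lambda>z. ft z \<mu>) has_derivative (\<lambda>h. gradf x \<mu> \<bullet> h)) (at x)) \<and>
             continuous_on UNIV (\<lambda>x. gradf x \<mu>)) \<and>
     (\<forall>x. ((\<lambda>(z, \<mu>). ft z \<mu>) \<longlongrightarrow> f x) (at (x, 0) within UNIV \<times> {0<..})) \<and>
     (\<exists>\<kappa> > 0. \<exists>\<omega>::real \<Rightarrow> real. (\<forall>\<mu>>0. \<omega> \<mu> > 0) \<and> (\<omega> \<longlongrightarrow> 0) (at_right 0) \<and>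
        (\<forall>x. \<forall>\<mu>>0. \<bar>ft x \<mu> - f x\<bar> \<le> \<kappa> * \<omega> \<mu>))"

definition retraction :: "'a::euclidean_space set \<Rightarrow> ('a \<Rightarrow> 'a \<Rightarrow> 'a) \<Rightarrow> bool" where
  "retraction M R \<longleftrightarrow>
     (\<forall>(x, v)\<in>tangent_bundle M. R x v \<in> M) \<and>
     smooth_map_on (tangent_bundle M) (\<lambda>(x, v). R x v) \<and>
     (\<forall>x\<in>M. R x 0 = x) \<and>
     (\<forall>x\<in>M. (R x has_derivative (\<lambda>v. v)) (at 0 within tangent_space M x))"

(* Riemannian gradient: orthogonal projection of the Euclidean gradient onto T_x M *)
definition riem_grad :: "'a::euclidean_space set \<Rightarrow> ('a \<Rightarrow> real \<Rightarrow> 'a) \<Rightarrow> 'a \<Rightarrow> real \<Rightarrow> 'a" where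
  "riem_grad M gradf x \<mu> = closest_point (tangent_space M x) (gradf x \<mu>)"

definition rssd_run ::
  "'a::euclidean_space set \<Rightarrow> ('a \<Rightarrow> real \<Rightarrow> real) \<Rightarrow> ('a \<Rightarrow> real \<Rightarrow> 'a) \<Rightarrow> ('a \<Rightarrow> 'a \<Rightarrow> 'a) \<Rightarrow>
   'a \<Rightarrow> real \<Rightarrow> real \<Rightarrow> real \<Rightarrow> real \<Rightarrow> real \<Rightarrow> real \<Rightarrow> real \<Rightarrow> real \<Rightarrow> real \<Rightarrow>
   (nat \<Rightarrow> 'a) \<Rightarrow> (nat \<Rightarrow> real) \<Rightarrow> (nat \<Rightarrow> real) \<Rightarrow> (nat \<Rightarrow> 'a) \<Rightarrow> bool" where
  "rssd_run M ft gradf R x0 \<delta>opt \<delta>0 \<mu>opt \<mu>0 \<beta> \<alpha> \<theta>\<delta> \<theta>\<mu> \<sigma> x \<mu> \<delta> \<eta> \<longleftrightarrow>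
     x 0 = x0 \<and> \<mu> 0 = \<mu>0 \<and> \<delta> 0 = \<delta>0 \<and>
     (\<forall>l. \<eta> l = - riem_grad M gradf (x l) (\<mu> l) \<and>
          \<not> (norm (\<eta> l) \<le> \<delta>opt \<and> \<mu> l \<le> \<mu>opt) \<and>
          (if norm (\<eta> l) \<le> \<delta> l then
             \<mu> (Suc l) = \<theta>\<mu> * \<mu> l \<and> \<delta> (Suc l) = \<theta>\<delta> * \<delta> l \<and> x (Suc l) = x l
           else
             \<mu> (Suc l) = \<mu> l \<and> \<delta> (Suc l) = \<delta> l \<and>
             (\<exists>m::nat.
                (\<forall>k<m. \<not> ft (R (x l) ((\<beta> ^ k * \<alpha>) *\<^sub>R \<eta> l)) (\<mu> l)
                          \<le> ft (x l) (\<mu> l) - \<sigma> * (\<beta> ^ k * \<alpha>) * (norm (riem_grad M gradf (x l) (\<mu> l)))\<^sup>2) \<and>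
                ft (R (x l) ((\<beta> ^ m * \<alpha>) *\<^sub>R \<eta> l)) (\<mu> l)
                   \<le> ft (x l) (\<mu> l) - \<sigma> * (\<beta> ^ m * \<alpha>) * (norm (riem_grad M gradf (x l) (\<mu> l)))\<^sup>2 \<and>
                x (Suc l) = R (x l) ((\<beta> ^ m * \<alpha>) *\<^sub>R \<eta> l))))"

end

theory Submission
  imports Defs
begin



lemma iter_dd_append: "iter_dd (a @ b) g = iter_dd a (iter_dd b g)"
  by (induction a) auto

lemma iter_dd_const: "\<exists>d. iter_dd vs (\<lambda>z. c) = (\<lambda>z. d)"
proof (induction vs)
  case Nil then show ?case by auto
next
  case (Cons v vs)
  then obtain d where "iter_dd vs (\<lambda>z. c) = (\<lambda>z. d)" by blast
  then show ?case by auto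
qed

lemma fd_local:
  assumes "open X" "y \<in> X" "\<And>z. z \<in> X \<Longrightarrow> f z = g z"
  shows "frechet_derivative f (at y) = frechet_derivative g (at y)"
proof -
  have "\<And>f'. (f has_derivative f') (at y) \<longleftrightarrow> (g has_derivative f') (at y)"
    using has_derivative_transform_within_open[of f _ y UNIV X g]
      has_derivative_transform_within_open[of g _ y UNIV X f] assms by auto
  then show ?thesis unfolding frechet_derivative_def by simp
qed

lemma diffon_cong:
  assumes "open V" "\<And>y. y \<in> V \<Longrightarrow> f y = g y" "f differentiable_on V"
  shows "g differentiable_on V"
  unfolding differentiable_on_def
proof
  fix y assume y: "y \<in> V"
  then have "f differentiable at y" using assms differentiable_on_eq_differentiable_at by blast
  then obtain f' where "(f has_derivative f') (at y)" unfolding differentiable_def by blast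
  then have "(g has_derivative f') (at y)"
    using has_derivative_transform_within_open[of f f' y UNIV V g] assms y by auto
  then show "g differentiable at y within V"
    using differentiable_def has_derivative_at_withinI by blast
qed

lemma diffon_at: "f differentiable_on V \<Longrightarrow> open V \<Longrightarrow> y \<in> V \<Longrightarrow> f differentiable at y"
  using differentiable_on_eq_differentiable_at by blast

lemma iter_dd_local:
  assumes "open V" "\<And>z. z \<in> V \<Longrightarrow> h z = h' z" "y \<in> V"
  shows "iter_dd vs h y = iter_dd vs h' y"
  using assms(3)
proof (induction vs arbitrary: y)
  case Nil then show ?case using assms by simp
next
  case (Cons v vs)
  have "frechet_derivative (iter_dd vs h) (at y) = frechet_derivative (iter_dd vs h') (at y)"
    by (rule fd_local[OF assms(1) Cons.prems]) (rule Cons.IH)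
  then show ?case by simp
qed

definition ssm :: "'a::euclidean_space set \<Rightarrow> ('a \<Rightarrow> real) \<Rightarrow> bool" where
  "ssm V h \<longleftrightarrow> (\<forall>vs. set vs \<subseteq> Basis \<longrightarrow> iter_dd vs h differentiable_on V)"

lemma ssm_cong:
  assumes "open V" "ssm V h" "\<And>z. z \<in> V \<Longrightarrow> h z = h' z"
  shows "ssm V h'"
  unfolding ssm_def
proof (intro allI impI)
  fix vs :: "'a list" assume "set vs \<subseteq> Basis"
  then have d: "iter_dd vs h differentiable_on V" using assms(2) ssm_def by blast
  show "iter_dd vs h' differentiable_on V"
    by (rule diffon_cong[OF assms(1) _ d]) (rule iter_dd_local[OF assms(1) assms(3)])
qed

lemma ssm_const: "ssm V (\<lambda>z. c)"
  unfolding ssm_def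
proof (intro allI impI)
  fix vs :: "'a list"
  obtain d where "iter_dd vs (\<lambda>z. c) = (\<lambda>z. d)" using iter_dd_const by blast
  then show "iter_dd vs (\<lambda>z. c) differentiable_on V" by simp
qed

lemma fd_add:
  assumes "f differentiable at y" "g differentiable at y"
  shows "frechet_derivative (\<lambda>z. f z + g z) (at y) = (\<lambda>h. frechet_derivative f (at y) h + frechet_derivative g (at y) h)"
proof -
  have "((\<lambda>z. f z + g z) has_derivative (\<lambda>h. frechet_derivative f (at y) h + frechet_derivative g (at y) h)) (at y)"
    using assms frechet_derivative_works by (intro has_derivative_add) auto
  then show ?thesis by (rule frechet_derivative_at[symmetric])
qed

lemma fd_scale:
  assumes "f differentiable at y"
  shows "frechet_derivative (\<lambda>z. c * f z :: real) (at y) = (\<lambda>h. c * frechet_derivative f (at y) h)"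
proof -
  have "((\<lambda>z. c * f z) has_derivative (\<lambda>h. c * frechet_derivative f (at y) h)) (at y)"
    using assms frechet_derivative_works by (intro has_derivative_mult_right) auto
  then show ?thesis by (rule frechet_derivative_at[symmetric])
qed

lemma ssm_diff_at: "ssm V h \<Longrightarrow> open V \<Longrightarrow> set vs \<subseteq> Basis \<Longrightarrow> y \<in> V \<Longrightarrow> iter_dd vs h differentiable at y"
  unfolding ssm_def using diffon_at by blast

lemma ssm_add:
  assumes "open V" "ssm V h1" "ssm V h2"
  shows "ssm V (\<lambda>z. h1 z + h2 z)"
proof -
  have eq: "iter_dd vs (\<lambda>z. h1 z + h2 z) y = iter_dd vs h1 y + iter_dd vs h2 y"
    if "set vs \<subseteq> Basis" "y \<in> V" for vs y
    using that
  proof (induction vs arbitrary: y)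
    case Nil then show ?case by simp
  next
    case (Cons v vs)
    have "frechet_derivative (iter_dd vs (\<lambda>z. h1 z + h2 z)) (at y)
        = frechet_derivative (\<lambda>z. iter_dd vs h1 z + iter_dd vs h2 z) (at y)"
      by (rule fd_local[OF assms(1) Cons.prems(2)]) (use Cons in auto)
    also have "\<dots> = (\<lambda>h. frechet_derivative (iter_dd vs h1) (at y) h + frechet_derivative (iter_dd vs h2) (at y) h)"
    proof -
      have vs: "set vs \<subseteq> Basis" using Cons.prems by simp
      show ?thesis by (rule fd_add; rule ssm_diff_at[OF _ assms(1) vs Cons.prems(2)]) (use assms in auto)
    qed
    finally show ?case by simp
  qed
  show ?thesis unfolding ssm_def
  proof (intro allI impI)
    fix vs :: "'a list" assume vs: "set vs \<subseteq> Basis"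
    have "(\<lambda>z. iter_dd vs h1 z + iter_dd vs h2 z) differentiable_on V"
      using assms vs unfolding ssm_def by (auto intro: differentiable_on_add)
    show "iter_dd vs (\<lambda>z. h1 z + h2 z) differentiable_on V"
      by (rule diffon_cong[OF assms(1) _ \<open>_ differentiable_on V\<close>]) (use eq[OF vs] in auto)
  qed
qed

lemma ssm_scale:
  assumes "open V" "ssm V h"
  shows "ssm V (\<lambda>z. c * h z)"
proof -
  have eq: "iter_dd vs (\<lambda>z. c * h z) y = c * iter_dd vs h y"
    if "set vs \<subseteq> Basis" "y \<in> V" for vs y
    using that
  proof (induction vs arbitrary: y)
    case Nil then show ?case by simp
  next
    case (Cons v vs)
    have "frechet_derivative (iter_dd vs (\<lambda>z. c * h z)) (at y)
        = frechet_derivative (\<lambda>z. c * iter_dd vs h z) (at y)"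
      by (rule fd_local[OF assms(1) Cons.prems(2)]) (use Cons in auto)
    also have "\<dots> = (\<lambda>k. c * frechet_derivative (iter_dd vs h) (at y) k)"
    proof -
      have vs: "set vs \<subseteq> Basis" using Cons.prems by simp
      show ?thesis by (rule fd_scale; rule ssm_diff_at[OF _ assms(1) vs Cons.prems(2)]) (use assms in auto)
    qed
    finally show ?case by simp
  qed
  show ?thesis unfolding ssm_def
  proof (intro allI impI)
    fix vs :: "'a list" assume vs: "set vs \<subseteq> Basis"
    have "(\<lambda>z. c * iter_dd vs h z) differentiable_on V"
      using assms vs unfolding ssm_def by (auto intro: differentiable_on_mult differentiable_on_const)
    show "iter_dd vs (\<lambda>z. c * h z) differentiable_on V"
      by (rule diffon_cong[OF assms(1) _ \<open>_ differentiable_on V\<close>]) (use eq[OF vs] in auto)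
  qed
qed

lemma ssm_sum:
  assumes "open V" "finite I" "\<And>i. i \<in> I \<Longrightarrow> ssm V (h i)"
  shows "ssm V (\<lambda>z. \<Sum>i\<in>I. c i * h i z)"
  using assms(2,3)
proof (induction I rule: finite_induct)
  case empty then show ?case using ssm_const by simp
next
  case (insert i I)
  then show ?case using ssm_add[OF assms(1)] ssm_scale[OF assms(1)] by simp
qed

lemma ssm_dir:
  assumes "open V" "ssm V h"
  shows "ssm V (\<lambda>y. frechet_derivative h (at y) w)"
proof -
  have b: "ssm V (iter_dd [i] h)" if "i \<in> Basis" for i
    unfolding ssm_def
  proof (intro allI impI)
    fix vs :: "'a list" assume "set vs \<subseteq> Basis"
    then have "set (vs @ [i]) \<subseteq> Basis" using that by auto
    then show "iter_dd vs (iter_dd [i] h) differentiable_on V"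
      using assms(2) unfolding ssm_def iter_dd_append[symmetric] by blast
  qed
  have S: "ssm V (\<lambda>z. \<Sum>i\<in>Basis. (w \<bullet> i) * iter_dd [i] h z)"
    by (rule ssm_sum[OF assms(1)]) (use b in auto)
  have E: "(\<Sum>i\<in>Basis. (w \<bullet> i) * iter_dd [i] h z) = frechet_derivative h (at z) w" if "z \<in> V" for z
  proof -
    have "h differentiable at z" using ssm_diff_at[OF assms(2,1), of "[]"] that by simp
    then have lin: "linear (frechet_derivative h (at z))"
      using frechet_derivative_works has_derivative_linear by blast
    have "frechet_derivative h (at z) w = frechet_derivative h (at z) (\<Sum>i\<in>Basis. (w \<bullet> i) *\<^sub>R i)"
      by (simp add: euclidean_representation)
    also have "\<dots> = (\<Sum>i\<in>Basis. (w \<bullet> i) * frechet_derivative h (at z) i)"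
      using lin by (simp add: linear_sum linear_scale)
    finally show ?thesis by simp
  qed
  show ?thesis by (rule ssm_cong[OF assms(1) S]) (rule E)
qed

lemma ssm_iter:
  assumes "open V" "ssm V h"
  shows "ssm V (iter_dd ws h)"
proof (induction ws)
  case Nil then show ?case using assms by simp
next
  case (Cons w ws)
  then show ?case using ssm_dir[OF assms(1)] by simp
qed



lemma ssm_diff0: "ssm V h \<Longrightarrow> open V \<Longrightarrow> y \<in> V \<Longrightarrow> h differentiable at y"
  using ssm_diff_at[of V h "[]" y] by simp

lemma affine_chain:
  assumes "H differentiable at (a + t *\<^sub>R u)"
  shows "((\<lambda>s. H (a + s *\<^sub>R u)) has_derivative (\<lambda>s. frechet_derivative H (at (a + t *\<^sub>R u)) (s *\<^sub>R u))) (at t)"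
proof -
  have 1: "((\<lambda>s. a + s *\<^sub>R u) has_derivative (\<lambda>s. s *\<^sub>R u)) (at t)"
    by (auto intro!: derivative_eq_intros)
  have 2: "(H has_derivative frechet_derivative H (at (a + t *\<^sub>R u))) (at (a + t *\<^sub>R u))"
    using assms frechet_derivative_works by blast
  show ?thesis using diff_chain_at[OF 1 2] by (simp add: o_def)
qed

lemma affine_iter:
  assumes "open V" "ssm V g" "open I" "\<And>t. t \<in> I \<Longrightarrow> a + t *\<^sub>R u \<in> V"
  shows "t \<in> I \<Longrightarrow> iter_dd (replicate k 1) (\<lambda>t. g (a + t *\<^sub>R u)) t = iter_dd (replicate k u) g (a + t *\<^sub>R u)"
proof (induction k arbitrary: t)
  case 0 then show ?case by simp
next
  case (Suc k)
  define H where "H = iter_dd (replicate k u) g"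
  have "ssm V H" unfolding H_def by (rule ssm_iter[OF assms(1,2)])
  then have Hd: "H differentiable at (a + t *\<^sub>R u)"
    by (rule ssm_diff0[OF _ assms(1) assms(4)[OF Suc.prems]])
  have "frechet_derivative (iter_dd (replicate k 1) (\<lambda>t. g (a + t *\<^sub>R u))) (at t)
      = frechet_derivative (\<lambda>s. H (a + s *\<^sub>R u)) (at t)"
    by (rule fd_local[OF assms(3) Suc.prems]) (simp add: Suc.IH H_def)
  also have "\<dots> = (\<lambda>s. frechet_derivative H (at (a + t *\<^sub>R u)) (s *\<^sub>R u))"
    by (rule frechet_derivative_at[symmetric, OF affine_chain[OF Hd]])
  finally show ?case by (simp add: H_def)
qed

lemma ssm_of_smooth: "smooth_on V F \<Longrightarrow> b \<in> Basis \<Longrightarrow> ssm V (\<lambda>y. F y \<bullet> b)"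
  unfolding smooth_on_def ssm_def by blast

lemma smooth_affine_curve:
  fixes F :: "'a::euclidean_space \<Rightarrow> 'b::euclidean_space"
  assumes "open V" "smooth_on V F" "\<And>t. t \<in> {-e<..<e} \<Longrightarrow> a + t *\<^sub>R u \<in> V"
  shows "smooth_on {-e<..<e} (\<lambda>t. F (a + t *\<^sub>R u))"
  unfolding smooth_on_def
proof (intro ballI allI impI)
  fix b :: 'b and vs :: "real list"
  assume b: "b \<in> Basis" and vs: "set vs \<subseteq> Basis"
  define g where "g = (\<lambda>y. F y \<bullet> b)"
  have g: "ssm V g" using ssm_of_smooth[OF assms(2) b] g_def by simp
  have vsr: "vs = replicate (length vs) 1"
    using vs by (simp add: replicate_length_same subset_iff)
  define H where "H = iter_dd (replicate (length vs) u) g"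
  have sH: "ssm V H" unfolding H_def by (rule ssm_iter[OF assms(1) g])
  have Hd: "H differentiable at (a + t *\<^sub>R u)" if "t \<in> {-e<..<e}" for t
    by (rule ssm_diff0[OF sH assms(1) assms(3)[OF that]])
  have d1: "(\<lambda>s. H (a + s *\<^sub>R u)) differentiable_on {-e<..<e}"
    unfolding differentiable_on_def
  proof
    fix t :: real assume "t \<in> {-e<..<e}"
    from affine_chain[OF Hd[OF this]] show "(\<lambda>s. H (a + s *\<^sub>R u)) differentiable at t within {-e<..<e}"
      unfolding differentiable_def by (blast intro: has_derivative_at_withinI)
  qed
  have eq: "H (a + t *\<^sub>R u) = iter_dd (replicate (length vs) 1) (\<lambda>t. g (a + t *\<^sub>R u)) t"
    if "t \<in> {-e<..<e}" for t
    using affine_iter[OF assms(1) g _ assms(3) that] H_def by simp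
  have "iter_dd (replicate (length vs) 1) (\<lambda>t. g (a + t *\<^sub>R u)) differentiable_on {-e<..<e}"
    by (rule diffon_cong[OF _ eq d1]) auto
  then show "iter_dd vs (\<lambda>y. F (a + y *\<^sub>R u) \<bullet> b) differentiable_on {-e<..<e}"
    using vsr unfolding g_def by simp
qed

lemma inner_sum_Basis_scale:
  assumes "i \<in> Basis" shows "(\<Sum>b\<in>Basis. c b *\<^sub>R b) \<bullet> i = c i"
proof -
  have "(\<Sum>b\<in>Basis. c b *\<^sub>R b) \<bullet> i = (\<Sum>b\<in>Basis. c b * (b \<bullet> i))" by (simp add: inner_sum_left)
  also have "\<dots> = (\<Sum>b\<in>Basis. if b = i then c b else 0)" by (rule sum.cong) (auto simp: inner_Basis assms)
  also have "\<dots> = c i" using assms by simp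
  finally show ?thesis .
qed

lemma smooth_diff:
  fixes F :: "'a::euclidean_space \<Rightarrow> 'b::euclidean_space"
  assumes "smooth_on U F" "open U" "p \<in> U"
  shows "F differentiable at p"
proof -
  define f' where "f' = (\<lambda>h. \<Sum>b\<in>Basis. frechet_derivative (\<lambda>y. F y \<bullet> b) (at p) h *\<^sub>R b)"
  have "(F has_derivative f') (at p within UNIV)"
  proof (rule has_derivative_componentwise_within[THEN iffD2], rule ballI)
    fix i :: 'b assume i: "i \<in> Basis"
    have "(\<lambda>y. F y \<bullet> i) differentiable at p"
      by (rule ssm_diff0[OF ssm_of_smooth[OF assms(1) i] assms(2,3)])
    then have "((\<lambda>y. F y \<bullet> i) has_derivative frechet_derivative (\<lambda>y. F y \<bullet> i) (at p)) (at p)"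
      using frechet_derivative_works by blast
    moreover have "(\<lambda>h. f' h \<bullet> i) = frechet_derivative (\<lambda>y. F y \<bullet> i) (at p)"
      unfolding f'_def by (rule ext) (rule inner_sum_Basis_scale[OF i])
    ultimately show "((\<lambda>x. F x \<bullet> i) has_derivative (\<lambda>x. f' x \<bullet> i)) (at p within UNIV)" by simp
  qed
  then show ?thesis unfolding differentiable_def by auto
qed



lemma tangent_subspace:
  fixes M :: "'a::euclidean_space set"
  assumes "embedded_submanifold M d" "x \<in> M"
  shows "subspace (tangent_space M x)"
proof -
  have "\<exists>U V (\<psi>::'a \<Rightarrow> 'a) \<psi>' L.
      open U \<and> open V \<and> x \<in> U \<and> subspace L \<and> dim L = d \<and>
      smooth_on U \<psi> \<and> smooth_on V \<psi>' \<and>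
      (\<forall>x\<in>U. \<psi> x \<in> V \<and> \<psi>' (\<psi> x) = x) \<and> (\<forall>y\<in>V. \<psi>' y \<in> U \<and> \<psi> (\<psi>' y) = y) \<and>
      \<psi> ` (M \<inter> U) = V \<inter> L"
    by (rule bspec[OF assms(1)[unfolded embedded_submanifold_def] assms(2)])
  then obtain U V L :: "'a set" and \<psi> \<psi>' :: "'a \<Rightarrow> 'a" where oU: "open U" and oV: "open V" and xU: "x \<in> U" and sL: "subspace L"
    and sm1: "smooth_on U \<psi>" and sm2: "smooth_on V \<psi>'"
    and inv1: "\<forall>x\<in>U. \<psi> x \<in> V \<and> \<psi>' (\<psi> x) = x" and inv2: "\<forall>y\<in>V. \<psi>' y \<in> U \<and> \<psi> (\<psi>' y) = y"
    and img: "\<psi> ` (M \<inter> U) = V \<inter> L"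
    by blast
  define D where "D = frechet_derivative \<psi> (at x)"
  have hD: "(\<psi> has_derivative D) (at x)"
    unfolding D_def using smooth_diff[OF sm1 oU xU] frechet_derivative_works by blast
  have linD: "linear D" using hD has_derivative_linear by blast
  define W where "W = {w. D w \<in> L}"
  have sW: "subspace W"
    unfolding subspace_def W_def
    using sL linD by (simp add: linear_0 linear_add linear_scale subspace_0 subspace_add subspace_mul)
  have clL: "closed L" using sL closed_subspace by blast
  have ax: "\<psi> x \<in> L" using img xU assms(2) by blast
  have "tangent_space M x = W"
  proof
    show "tangent_space M x \<subseteq> W"
    proof
      fix v assume "v \<in> tangent_space M x"
      then obtain \<gamma> :: "real \<Rightarrow> 'a" and e where e: "e > 0" and gM: "\<forall>t\<in>{-e<..<e}. \<gamma> t \<in> M"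
        and g0: "\<gamma> 0 = x" and gd: "(\<gamma> has_vector_derivative v) (at 0)"
        unfolding tangent_space_def by blast
      have "continuous (at 0) \<gamma>" using gd has_vector_derivative_continuous by blast
      then have "(\<gamma> \<longlongrightarrow> x) (at 0)" using g0 by (simp add: continuous_at)
      then have ev1: "eventually (\<lambda>t. \<gamma> t \<in> U) (at 0)" using oU xU topological_tendstoD by blast
      have ev2: "eventually (\<lambda>t. t \<in> {-e<..<e}) (at (0::real))"
        unfolding eventually_at using e by (intro exI[of _ e]) (auto simp: dist_real_def)
      define h where "h = \<psi> \<circ> \<gamma>"
      have evL: "eventually (\<lambda>t. h t \<in> L) (at 0)"
        using ev1 ev2
      proof (rule eventually_elim2)
        fix t assume "\<gamma> t \<in> U" "t \<in> {-e<..<e}"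
        then have "\<gamma> t \<in> M \<inter> U" using gM by blast
        then show "h t \<in> L" using img unfolding h_def by auto
      qed
      have "(\<gamma> has_derivative (\<lambda>t. t *\<^sub>R v)) (at 0)" using gd has_vector_derivative_def by blast
      from diff_chain_at[OF this] hD g0 have "(h has_derivative (\<lambda>t. D (t *\<^sub>R v))) (at 0)"
        unfolding h_def by (simp add: o_def)
      then have hd: "(h has_derivative (\<lambda>t. t *\<^sub>R D v)) (at 0)"
        using linD by (simp add: linear_scale)
      define q where "q = (\<lambda>y::real. (1 / y) *\<^sub>R (h y - h 0))"
      have lim: "(q \<longlongrightarrow> D v) (at 0)"
      proof (rule tendsto_componentwise_iff[THEN iffD2], rule ballI)
        fix b :: 'a assume b: "b \<in> Basis"
        have "((\<lambda>t. h t \<bullet> b) has_derivative (\<lambda>t. (t *\<^sub>R D v) \<bullet> b)) (at 0 within UNIV)"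
          using has_derivative_componentwise_within[THEN iffD1, OF hd] b by blast
        moreover have "(\<lambda>t. (t *\<^sub>R D v) \<bullet> b) = (*) (D v \<bullet> b)" by (rule ext) simp
        ultimately have "((\<lambda>t. h t \<bullet> b) has_field_derivative (D v \<bullet> b)) (at 0)"
          unfolding has_field_derivative_def by simp
        then have "((\<lambda>y. (h y \<bullet> b - h 0 \<bullet> b) / (y - 0)) \<longlongrightarrow> D v \<bullet> b) (at 0)"
          by (rule has_field_derivative_iff[THEN iffD1])
        moreover have "(\<lambda>y. (h y \<bullet> b - h 0 \<bullet> b) / (y - 0)) = (\<lambda>y. q y \<bullet> b)"
          unfolding q_def by (rule ext) (simp add: inner_diff_left divide_simps)
        ultimately show "((\<lambda>y. q y \<bullet> b) \<longlongrightarrow> D v \<bullet> b) (at 0)" by simp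
      qed
      have evq: "eventually (\<lambda>y. q y \<in> L) (at 0)"
        using evL
      proof (rule eventually_mono)
        fix y assume "h y \<in> L"
        moreover have "h 0 \<in> L" using ax g0 unfolding h_def by simp
        ultimately show "q y \<in> L" unfolding q_def using sL by (simp add: subspace_diff subspace_mul)
      qed
      have "D v \<in> L" by (rule Lim_in_closed_set[OF clL evq _ lim]) simp
      then show "v \<in> W" unfolding W_def by simp
    qed
  next
    show "W \<subseteq> tangent_space M x"
    proof
      fix w assume "w \<in> W"
      then have uL: "D w \<in> L" unfolding W_def by simp
      define u where "u = D w"
      define a where "a = \<psi> x"
      have aV: "a \<in> V" using inv1 xU a_def by blast
      obtain r where r: "r > 0" "ball a r \<subseteq> V" using oV aV open_contains_ball by blast
      define e where "e = r / (norm u + 1)"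
      have nu: "norm u + 1 > 0" using norm_ge_zero[of u] by linarith
      have e: "e > 0" unfolding e_def using r nu by (simp add: divide_pos_pos)
      have inV: "a + t *\<^sub>R u \<in> V" if "t \<in> {-e<..<e}" for t
      proof -
        have "\<bar>t\<bar> < e" using that by auto
        then have "\<bar>t\<bar> * norm u \<le> e * norm u" by (simp add: mult_right_mono)
        also have "\<dots> < r" unfolding e_def using r nu
          by (simp add: field_simps)
        finally have "norm (t *\<^sub>R u) < r" by simp
        then have "a + t *\<^sub>R u \<in> ball a r" by (simp add: dist_norm)
        then show ?thesis using r by blast
      qed
      define \<gamma> where "\<gamma> = (\<lambda>t. \<psi>' (a + t *\<^sub>R u))"
      have sg: "smooth_on {-e<..<e} \<gamma>" unfolding \<gamma>_def by (rule smooth_affine_curve[OF oV sm2 inV])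
      have gM: "\<forall>t\<in>{-e<..<e}. \<gamma> t \<in> M"
      proof
        fix t assume t: "t \<in> {-e<..<e}"
        have "a + t *\<^sub>R u \<in> L" using ax uL sL unfolding a_def u_def by (simp add: subspace_add subspace_mul)
        then have "a + t *\<^sub>R u \<in> \<psi> ` (M \<inter> U)" using img inV[OF t] by blast
        then obtain z where z: "z \<in> M \<inter> U" "a + t *\<^sub>R u = \<psi> z" by blast
        then have "\<gamma> t = z" unfolding \<gamma>_def using inv1 by simp
        then show "\<gamma> t \<in> M" using z by blast
      qed
      have g0: "\<gamma> 0 = x" unfolding \<gamma>_def a_def using inv1 xU by simp
      define D' where "D' = frechet_derivative \<psi>' (at a)"
      have d': "\<psi>' differentiable at a" using smooth_diff[OF sm2 oV aV] .
      have hD': "(\<psi>' has_derivative D') (at a)"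
        unfolding D'_def using d' frechet_derivative_works by blast
      have linD': "linear D'" using hD' has_derivative_linear by blast
      have "((\<psi>' \<circ> \<psi>) has_derivative (D' \<circ> D)) (at x)"
        using diff_chain_at[OF hD] hD' a_def by simp
      moreover have "((\<psi>' \<circ> \<psi>) has_derivative (\<lambda>z. z)) (at x)"
        by (rule has_derivative_transform_within_open[OF has_derivative_ident oU xU]) (use inv1 in simp)
      ultimately have DD: "D' \<circ> D = (\<lambda>z. z)" using has_derivative_unique by blast
      have Dw: "D' u = w" unfolding u_def using fun_cong[OF DD, of w] by simp
      have "(\<gamma> has_derivative (\<lambda>s. D' (s *\<^sub>R u))) (at 0)"
        using affine_chain[of \<psi>' a 0 u] d' unfolding \<gamma>_def D'_def by simp
      then have "(\<gamma> has_vector_derivative w) (at 0)"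
        unfolding has_vector_derivative_def using linD' Dw by (simp add: linear_scale)
      then show "w \<in> tangent_space M x"
        unfolding tangent_space_def using e sg gM g0 by blast
    qed
  qed
  then show ?thesis using sW by simp
qed

lemma proj_facts:
  fixes T :: "'a::euclidean_space set"
  assumes "subspace T"
  shows "closest_point T g \<in> T" "(g - closest_point T g) \<bullet> closest_point T g = 0"
    "norm (closest_point T g) \<le> norm g"
proof -
  have cl: "closed T" using assms closed_subspace by blast
  have ne: "T \<noteq> {}" using assms subspace_0 by blast
  have cv: "convex T" using assms subspace_imp_convex by blast
  show P: "closest_point T g \<in> T" using closest_point_exists(1)[OF cl ne] .
  define P where "P = closest_point T g"
  have 1: "(g - P) \<bullet> (0 - P) \<le> 0" unfolding P_def
    by (rule closest_point_dot[OF cv cl]) (rule subspace_0[OF assms])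
  have 2: "(g - P) \<bullet> (2 *\<^sub>R P - P) \<le> 0" unfolding P_def
    by (rule closest_point_dot[OF cv cl]) (rule subspace_mul[OF assms P])
  have "2 *\<^sub>R P - P = P" by (simp add: algebra_simps scaleR_2)
  with 1 2 have o: "(g - P) \<bullet> P = 0" by (simp add: inner_diff_right)
  then show "(g - closest_point T g) \<bullet> closest_point T g = 0" unfolding P_def .
  have "norm g ^ 2 = norm (g - P) ^ 2 + norm P ^ 2"
  proof -
    have "g = (g - P) + P" by simp
    then have "norm g ^ 2 = norm ((g - P) + P) ^ 2" by simp
    also have "\<dots> = norm (g - P) ^ 2 + norm P ^ 2"
      using o by (simp only: power2_norm_eq_inner inner_add_left inner_add_right inner_commute[of P "g - P"])
    finally show ?thesis .
  qed
  then have "norm P ^ 2 \<le> norm g ^ 2" by simp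
  then show "norm (closest_point T g) \<le> norm g" unfolding P_def by (rule power2_le_imp_le) simp
qed



lemma fd_expand:
  fixes f :: "'c::euclidean_space \<Rightarrow> real"
  assumes "f differentiable at p"
  shows "frechet_derivative f (at p) h = (\<Sum>i\<in>Basis. (h \<bullet> i) * frechet_derivative f (at p) i)"
proof -
  have lin: "linear (frechet_derivative f (at p))"
    using assms frechet_derivative_works has_derivative_linear by blast
  have "frechet_derivative f (at p) h = frechet_derivative f (at p) (\<Sum>i\<in>Basis. (h \<bullet> i) *\<^sub>R i)"
    by (simp add: euclidean_representation)
  also have "\<dots> = (\<Sum>i\<in>Basis. (h \<bullet> i) * frechet_derivative f (at p) i)"
    using lin by (simp add: linear_sum linear_scale)
  finally show ?thesis .
qed

lemma smooth_C1:
  fixes F :: "'c::euclidean_space \<Rightarrow> 'b::euclidean_space"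
  assumes sm: "smooth_on U F" and oU: "open U" and p0: "p0 \<in> U"
  shows "(\<forall>p\<in>U. (F has_derivative frechet_derivative F (at p)) (at p))"
    "\<forall>\<epsilon>>0. \<exists>\<rho>>0. \<forall>p\<in>U. dist p p0 < \<rho> \<longrightarrow>
        (\<forall>h. norm (frechet_derivative F (at p) h - frechet_derivative F (at p0) h) \<le> \<epsilon> * norm h)"
proof -
  show P1: "\<forall>p\<in>U. (F has_derivative frechet_derivative F (at p)) (at p)"
    using smooth_diff[OF sm oU] frechet_derivative_works by blast
  define c where "c = (\<lambda>b i p. iter_dd [i] (\<lambda>y. F y \<bullet> b) p)"
  have comp: "frechet_derivative F (at p) h \<bullet> b = (\<Sum>i\<in>Basis. (h \<bullet> i) * c b i p)"
    if p: "p \<in> U" and b: "b \<in> Basis" for p h b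
  proof -
    have "((\<lambda>y. F y \<bullet> b) has_derivative (\<lambda>h. frechet_derivative F (at p) h \<bullet> b)) (at p within UNIV)"
      using has_derivative_componentwise_within[THEN iffD1, OF P1[rule_format, OF p]] b by blast
    then have e1: "(\<lambda>h. frechet_derivative F (at p) h \<bullet> b) = frechet_derivative (\<lambda>y. F y \<bullet> b) (at p)"
      by (simp add: frechet_derivative_at)
    have d: "(\<lambda>y. F y \<bullet> b) differentiable at p" by (rule ssm_diff0[OF ssm_of_smooth[OF sm b] oU p])
    show ?thesis using fd_expand[OF d, of h] fun_cong[OF e1, of h] unfolding c_def by simp
  qed
  have cc: "continuous_on U (c b i)" if "b \<in> Basis" "i \<in> Basis" for b i
  proof -
    have "c b i differentiable_on U"
      using ssm_of_smooth[OF sm \<open>b \<in> Basis\<close>] \<open>i \<in> Basis\<close> unfolding ssm_def c_def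
      by (metis empty_subsetI insert_subset list.set(1) list.set(2))
    then show ?thesis using differentiable_imp_continuous_on by blast
  qed
  define E where "E = (\<lambda>p. \<Sum>b\<in>Basis. \<Sum>i\<in>Basis. \<bar>c b i p - c b i p0\<bar>)"
  have cE: "continuous_on U E" unfolding E_def
    by (intro continuous_on_sum continuous_on_rabs continuous_on_diff continuous_on_const) (use cc in auto)
  have E0: "E p0 = 0" unfolding E_def by simp
  show "\<forall>\<epsilon>>0. \<exists>\<rho>>0. \<forall>p\<in>U. dist p p0 < \<rho> \<longrightarrow>
        (\<forall>h. norm (frechet_derivative F (at p) h - frechet_derivative F (at p0) h) \<le> \<epsilon> * norm h)"
  proof (intro allI impI)
    fix \<epsilon> :: real assume "\<epsilon> > 0"
    then obtain \<rho> where \<rho>: "\<rho> > 0" "\<forall>p\<in>U. dist p p0 < \<rho> \<longrightarrow> dist (E p) (E p0) < \<epsilon>"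
      using cE p0 unfolding continuous_on_iff by blast
    show "\<exists>\<rho>>0. \<forall>p\<in>U. dist p p0 < \<rho> \<longrightarrow>
        (\<forall>h. norm (frechet_derivative F (at p) h - frechet_derivative F (at p0) h) \<le> \<epsilon> * norm h)"
    proof (intro exI[of _ \<rho>] conjI ballI impI allI)
      show "\<rho> > 0" by fact
      fix p h assume p: "p \<in> U" and dp: "dist p p0 < \<rho>"
      have Ep: "E p < \<epsilon>" using \<rho>(2) p dp E0 by (auto simp: dist_real_def)
      have "norm (frechet_derivative F (at p) h - frechet_derivative F (at p0) h)
          \<le> (\<Sum>b\<in>Basis. \<bar>(frechet_derivative F (at p) h - frechet_derivative F (at p0) h) \<bullet> b\<bar>)"
        by (rule norm_le_l1)
      also have "\<dots> = (\<Sum>b\<in>Basis. \<bar>\<Sum>i\<in>Basis. (h \<bullet> i) * (c b i p - c b i p0)\<bar>)"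
        by (rule sum.cong) (simp_all add: inner_diff_left comp p p0 sum_subtractf right_diff_distrib)
      also have "\<dots> \<le> (\<Sum>b\<in>Basis. \<Sum>i\<in>Basis. norm h * \<bar>c b i p - c b i p0\<bar>)"
      proof (rule sum_mono)
        fix b :: 'b assume "b \<in> Basis"
        have "\<bar>\<Sum>i\<in>Basis. (h \<bullet> i) * (c b i p - c b i p0)\<bar> \<le> (\<Sum>i\<in>Basis. \<bar>(h \<bullet> i) * (c b i p - c b i p0)\<bar>)"
          by (rule sum_abs)
        also have "\<dots> \<le> (\<Sum>i\<in>Basis. norm h * \<bar>c b i p - c b i p0\<bar>)"
        proof (rule sum_mono)
          fix i :: 'c assume "i \<in> Basis"
          then have "\<bar>h \<bullet> i\<bar> \<le> norm h" by (rule Basis_le_norm)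
          then show "\<bar>(h \<bullet> i) * (c b i p - c b i p0)\<bar> \<le> norm h * \<bar>c b i p - c b i p0\<bar>"
            by (simp add: abs_mult mult_right_mono)
        qed
        finally show "\<bar>\<Sum>i\<in>Basis. (h \<bullet> i) * (c b i p - c b i p0)\<bar> \<le> (\<Sum>i\<in>Basis. norm h * \<bar>c b i p - c b i p0\<bar>)" .
      qed
      also have "\<dots> = norm h * E p" unfolding E_def by (simp add: sum_distrib_left)
      also have "\<dots> \<le> \<epsilon> * norm h" using Ep by (simp add: mult.commute mult_right_mono)
      finally show "norm (frechet_derivative F (at p) h - frechet_derivative F (at p0) h) \<le> \<epsilon> * norm h" .
    qed
  qed
qed


lemma dist_pair_le:
  fixes a c :: "'a::real_normed_vector" and b d :: "'b::real_normed_vector"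
  shows "dist (a, b) (c, d) \<le> dist a c + dist b d"
proof -
  have "dist (a, b) (c, d) = norm (a - c, b - d)" by (simp add: dist_norm)
  also have "\<dots> \<le> norm (a - c) + norm (b - d)" by (rule norm_Pair_le)
  finally show ?thesis by (simp add: dist_norm)
qed

lemma retr_deriv:
  fixes G :: "'a::euclidean_space \<times> 'a \<Rightarrow> 'a"
  assumes sT: "subspace T" and vT: "v \<in> T" and dR: "(Rx has_derivative (\<lambda>v. v)) (at 0 within T)"
    and oU: "open U" and xU: "(x, 0) \<in> U" and dG: "(G has_derivative DG) (at (x, 0))"
    and eq: "\<And>w. w \<in> T \<Longrightarrow> (x, w) \<in> U \<Longrightarrow> G (x, w) = Rx w"
  shows "DG (0, v) = v"
proof -
  have l1: "((\<lambda>t::real. (x, t *\<^sub>R v)) has_derivative (\<lambda>t. (0, t *\<^sub>R v))) (at 0)"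
    by (intro has_derivative_Pair has_derivative_const has_derivative_scaleR_left has_derivative_ident)
  have d1: "((\<lambda>t. G (x, t *\<^sub>R v)) has_derivative (\<lambda>t. DG (0, t *\<^sub>R v))) (at 0)"
    using has_derivative_compose[OF l1, of G DG] dG by simp
  have l2: "((\<lambda>t::real. t *\<^sub>R v) has_derivative (\<lambda>t. t *\<^sub>R v)) (at 0)"
    by (intro has_derivative_scaleR_left has_derivative_ident)
  have rng: "(\<lambda>t::real. t *\<^sub>R v) ` UNIV \<subseteq> T" using sT vT subspace_mul by blast
  have "(Rx has_derivative (\<lambda>v. v)) (at ((\<lambda>t::real. t *\<^sub>R v) 0) within ((\<lambda>t::real. t *\<^sub>R v) ` UNIV))"
    using has_derivative_subset[OF dR rng] by simp
  from has_derivative_in_compose[OF l2 this]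
  have d2: "((\<lambda>t. Rx (t *\<^sub>R v)) has_derivative (\<lambda>t. t *\<^sub>R v)) (at 0)" by simp
  define Ot where "Ot = (\<lambda>t::real. (x, t *\<^sub>R v)) -` U"
  have oOt: "open Ot" unfolding Ot_def
    by (rule continuous_open_vimage[OF oU]) (intro continuous_intros)
  have "0 \<in> Ot" unfolding Ot_def using xU by simp
  then have d3: "((\<lambda>t. G (x, t *\<^sub>R v)) has_derivative (\<lambda>t. t *\<^sub>R v)) (at 0)"
    by (rule has_derivative_transform_within_open[OF d2 oOt])
       (simp add: Ot_def eq subspace_mul[OF sT vT])
  have "(\<lambda>t. DG (0, t *\<^sub>R v)) = (\<lambda>t. t *\<^sub>R v)" using has_derivative_unique[OF d1 d3] .
  from fun_cong[OF this, of 1] show ?thesis by simp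
qed


lemma retr_local:
  fixes M :: "'a::euclidean_space set" and R :: "'a \<Rightarrow> 'a \<Rightarrow> 'a"
  assumes TS: "\<And>x. x \<in> M \<Longrightarrow> subspace (tangent_space M x)"
    and ret: "retraction M R" and xs: "xs \<in> M" and \<epsilon>: "\<epsilon> > 0"
  shows "\<exists>\<rho>>0. \<forall>x\<in>M. \<forall>v\<in>tangent_space M x. dist x xs < \<rho> \<longrightarrow> norm v < \<rho> \<longrightarrow>
           norm (R x v - x - v) \<le> \<epsilon> * norm v"
proof -
  have r2: "smooth_map_on (tangent_bundle M) (\<lambda>(x, v). R x v)"
    and r3: "\<forall>x\<in>M. R x 0 = x"
    and r4: "\<forall>x\<in>M. (R x has_derivative (\<lambda>v. v)) (at 0 within tangent_space M x)"
    using ret unfolding retraction_def by auto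
  define p0 where "p0 = (xs, 0::'a)"
  have p0TM: "p0 \<in> tangent_bundle M"
    unfolding p0_def tangent_bundle_def using xs TS[OF xs] subspace_0 by blast
  have "\<exists>U G. open U \<and> p0 \<in> U \<and> smooth_on U G \<and> (\<forall>q\<in>tangent_bundle M \<inter> U. G q = (\<lambda>(x, v). R x v) q)"
    using r2 p0TM unfolding smooth_map_on_def by blast
  then obtain U and G :: "'a \<times> 'a \<Rightarrow> 'a" where oU: "open U" and p0U: "p0 \<in> U" and sG: "smooth_on U G"
    and GR: "\<forall>q\<in>tangent_bundle M \<inter> U. G q = (\<lambda>(x, v). R x v) q"
    by blast
  define DG where "DG = (\<lambda>p. frechet_derivative G (at p))"
  have C1a: "\<forall>p\<in>U. (G has_derivative DG p) (at p)"
    using smooth_C1(1)[OF sG oU p0U] unfolding DG_def .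
  have C1b: "\<forall>\<epsilon>>0. \<exists>\<rho>>0. \<forall>p\<in>U. dist p p0 < \<rho> \<longrightarrow> (\<forall>h. norm (DG p h - DG p0 h) \<le> \<epsilon> * norm h)"
    using smooth_C1(2)[OF sG oU p0U] unfolding DG_def .
  have "\<epsilon> / 2 > 0" using \<epsilon> by simp
  then obtain \<rho>1 where \<rho>1: "\<rho>1 > 0" "\<forall>p\<in>U. dist p p0 < \<rho>1 \<longrightarrow> (\<forall>h. norm (DG p h - DG p0 h) \<le> (\<epsilon>/2) * norm h)"
    using C1b by blast
  obtain \<rho>2 where \<rho>2: "\<rho>2 > 0" "ball p0 \<rho>2 \<subseteq> U" using oU p0U open_contains_ball by blast
  define r where "r = min \<rho>1 \<rho>2"
  have r: "r > 0" "r \<le> \<rho>1" "r \<le> \<rho>2" unfolding r_def using \<rho>1 \<rho>2 by auto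
  show ?thesis
  proof (intro exI[of _ "r/2"] conjI ballI impI)
    show "r/2 > 0" using r by simp
    fix x v assume xM: "x \<in> M" and vT: "v \<in> tangent_space M x" and dx: "dist x xs < r/2" and nv: "norm v < r/2"
    define S where "S = ball p0 r"
    have SU: "S \<subseteq> U" using \<rho>2 r unfolding S_def by auto
    have inS: "(x, w) \<in> S" if "norm w < r/2" for w
    proof -
      have "dist (x, w) p0 \<le> dist x xs + dist w 0" unfolding p0_def by (rule dist_pair_le)
      also have "\<dots> < r" using dx that by simp
      finally show ?thesis unfolding S_def by (simp add: dist_commute)
    qed
    have seg: "(x, 0) + t *\<^sub>R ((x, v) - (x, 0)) \<in> S" if "t \<in> {0..1}" for t
    proof -
      have "norm (t *\<^sub>R v) \<le> norm v" using that by (simp add: mult_left_le_one_le)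
      then have "(x, t *\<^sub>R v) \<in> S" using inS nv by simp
      then show ?thesis by simp
    qed
    have der: "(G has_derivative DG q) (at q within S)" if "q \<in> S" for q
      using C1a SU that has_derivative_at_withinI by blast
    have x0S: "(x, 0) \<in> S" using inS[of 0] r by simp
    have x0U: "(x, 0) \<in> U" using x0S SU by blast
    have near: "norm (DG q h - DG p0 h) \<le> (\<epsilon>/2) * norm h" if "q \<in> S" for q h
    proof -
      have "dist q p0 < \<rho>1" using that r unfolding S_def by (simp add: dist_commute)
      then show ?thesis using \<rho>1(2) SU that by blast
    qed
    have bound: "onorm (DG q - DG (x, 0)) \<le> \<epsilon>" if "q \<in> S" for q
    proof (rule onorm_le)
      fix h
      have "norm ((DG q - DG (x, 0)) h) = norm ((DG q h - DG p0 h) - (DG (x, 0) h - DG p0 h))"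
        by (simp add: fun_diff_def)
      also have "\<dots> \<le> norm (DG q h - DG p0 h) + norm (DG (x, 0) h - DG p0 h)"
        by (rule norm_triangle_ineq4)
      also have "\<dots> \<le> (\<epsilon>/2) * norm h + (\<epsilon>/2) * norm h"
        using near[OF that, of h] near[OF x0S, of h] by linarith
      finally show "norm ((DG q - DG (x, 0)) h) \<le> \<epsilon> * norm h" by simp
    qed
    have lin: "norm (G (x, v) - G (x, 0) - DG (x, 0) ((x, v) - (x, 0))) \<le> norm ((x, v) - (x, 0)) * \<epsilon>"
      by (rule differentiable_bound_linearization[of "(x, 0)" "(x, v)" S G DG "(x, 0)" \<epsilon>, OF seg der bound x0S])
    have T0: "0 \<in> tangent_space M x" using TS[OF xM] subspace_0 by blast
    have G0: "G (x, 0) = x" using GR x0U xM T0 r3 unfolding tangent_bundle_def by auto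
    have vU: "(x, v) \<in> U" using inS[OF nv] SU by blast
    have Gv: "G (x, v) = R x v" using GR vU xM vT unfolding tangent_bundle_def by auto
    have eqG: "G (x, w) = R x w" if "w \<in> tangent_space M x" "(x, w) \<in> U" for w
      using GR that xM unfolding tangent_bundle_def by auto
    have Dv: "DG (x, 0) (0, v) = v"
      by (rule retr_deriv[OF TS[OF xM] vT r4[rule_format, OF xM] oU x0U C1a[rule_format, OF x0U] eqG])
    show "norm (R x v - x - v) \<le> \<epsilon> * norm v"
      using lin G0 Gv Dv by (simp add: mult.commute)
  qed
qed



lemma fun_local:
  fixes \<phi> :: "'a::euclidean_space \<Rightarrow> real"
  assumes d: "\<And>x. (\<phi> has_derivative (\<lambda>h. g x \<bullet> h)) (at x)" and cg: "continuous_on UNIV g"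
    and \<epsilon>: "\<epsilon> > 0"
  shows "\<exists>\<rho>>0. \<forall>x y. dist x xs < \<rho> \<longrightarrow> dist y xs < \<rho> \<longrightarrow>
           \<phi> y - \<phi> x - g x \<bullet> (y - x) \<le> \<epsilon> * norm (y - x)"
proof -
  have "\<epsilon>/2 > 0" using \<epsilon> by simp
  then obtain \<rho> where \<rho>: "\<rho> > 0" "\<forall>z. dist z xs < \<rho> \<longrightarrow> dist (g z) (g xs) < \<epsilon>/2"
    using cg unfolding continuous_on_iff by blast
  show ?thesis
  proof (intro exI[of _ \<rho>] conjI allI impI)
    show "\<rho> > 0" by fact
    fix x y assume dx: "dist x xs < \<rho>" and dy: "dist y xs < \<rho>"
    define S where "S = ball xs \<rho>"
    have xS: "x \<in> S" and yS: "y \<in> S" using dx dy unfolding S_def by (auto simp: dist_commute)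
    have seg: "x + t *\<^sub>R (y - x) \<in> S" if "t \<in> {0..1}" for t
    proof -
      have "x + t *\<^sub>R (y - x) = (1 - t) *\<^sub>R x + t *\<^sub>R y" by (simp add: algebra_simps)
      moreover have "(1 - t) *\<^sub>R x + t *\<^sub>R y \<in> S"
        using that xS yS convexD[OF convex_ball[of xs \<rho>], of x y "1 - t" t] unfolding S_def by auto
      ultimately show ?thesis by simp
    qed
    have der: "(\<phi> has_derivative (\<lambda>h. g q \<bullet> h)) (at q within S)" for q
      using d has_derivative_at_withinI by blast
    have bound: "onorm ((\<lambda>h. g q \<bullet> h) - (\<lambda>h. g x \<bullet> h)) \<le> \<epsilon>" if "q \<in> S" for q
    proof (rule onorm_le)
      fix h
      have "norm (((\<lambda>h. g q \<bullet> h) - (\<lambda>h. g x \<bullet> h)) h) = \<bar>(g q - g x) \<bullet> h\<bar>"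
        by (simp add: fun_diff_def inner_diff_left)
      also have "\<dots> \<le> norm (g q - g x) * norm h" by (rule Cauchy_Schwarz_ineq2)
      also have "norm (g q - g x) \<le> \<epsilon>"
      proof -
        have "dist (g q) (g xs) < \<epsilon>/2" using \<rho>(2) that unfolding S_def by (simp add: dist_commute)
        moreover have "dist (g x) (g xs) < \<epsilon>/2" using \<rho>(2) dx by simp
        ultimately show ?thesis using dist_triangle2[of "g q" "g x" "g xs"] by (simp add: dist_norm)
      qed
      then have "norm (g q - g x) * norm h \<le> \<epsilon> * norm h" by (simp add: mult_right_mono)
      finally show "norm (((\<lambda>h. g q \<bullet> h) - (\<lambda>h. g x \<bullet> h)) h) \<le> \<epsilon> * norm h" .
    qed
    have "norm (\<phi> y - \<phi> x - g x \<bullet> (y - x)) \<le> norm (y - x) * \<epsilon>"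
      by (rule differentiable_bound_linearization[of x y S \<phi> "\<lambda>q h. g q \<bullet> h" x \<epsilon>, OF seg der bound xS])
    then show "\<phi> y - \<phi> x - g x \<bullet> (y - x) \<le> \<epsilon> * norm (y - x)" by (simp add: mult.commute)
  qed
qed

lemma shrink_to_zero:
  fixes d :: "nat \<Rightarrow> real"
  assumes K: "infinite K" and \<theta>: "0 < \<theta>" "\<theta> < 1" and pos: "\<And>l. d l > 0"
    and s1: "\<And>l. l \<in> K \<Longrightarrow> d (Suc l) = \<theta> * d l" and s2: "\<And>l. l \<notin> K \<Longrightarrow> d (Suc l) = d l"
  shows "d \<longlonglongrightarrow> 0"
proof -
  have bnd: "d l \<le> d 0 * \<theta> ^ card (K \<inter> {..<l})" for l
  proof (induction l)
    case 0 then show ?case by simp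
  next
    case (Suc l)
    show ?case
    proof (cases "l \<in> K")
      case True
      have "K \<inter> {..<Suc l} = insert l (K \<inter> {..<l})" using True by auto
      then have c: "card (K \<inter> {..<Suc l}) = Suc (card (K \<inter> {..<l}))" by simp
      have "d (Suc l) = \<theta> * d l" using s1 True by simp
      also have "\<dots> \<le> \<theta> * (d 0 * \<theta> ^ card (K \<inter> {..<l}))" using Suc.IH \<theta> by simp
      finally show ?thesis using c by (simp add: algebra_simps)
    next
      case False
      have "K \<inter> {..<Suc l} = K \<inter> {..<l}" using False by (auto simp: less_Suc_eq)
      then show ?thesis using s2 False Suc.IH by simp
    qed
  qed
  have mono: "\<theta> ^ b \<le> \<theta> ^ a" if "a \<le> b" for a b using that \<theta> by (simp add: power_decreasing)
  show ?thesis
  proof (rule LIMSEQ_I)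
    fix r :: real assume r: "r > 0"
    have d0: "d 0 > 0" by (rule pos)
    obtain N where N: "\<theta> ^ N < r / d 0" using real_arch_pow_inv[of "r / d 0" \<theta>] r d0 \<theta> by auto
    obtain F where F: "F \<subseteq> K" "finite F" "card F = N" using infinite_arbitrarily_large[OF K] by blast
    obtain l0 where l0: "\<forall>n\<in>F. n < l0" using F(2) finite_nat_set_iff_bounded by blast
    show "\<exists>no. \<forall>n\<ge>no. norm (d n - 0) < r"
    proof (intro exI[of _ l0] allI impI)
      fix n assume n: "n \<ge> l0"
      have "F \<subseteq> K \<inter> {..<n}" using F(1) l0 n by auto
      then have "N \<le> card (K \<inter> {..<n})" using F(3) card_mono by (metis finite_Int finite_lessThan)
      then have "\<theta> ^ card (K \<inter> {..<n}) \<le> \<theta> ^ N" by (rule mono)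
      then have "d n \<le> d 0 * \<theta> ^ N" using bnd[of n] d0 by (smt (verit) mult_left_mono)
      also have "\<dots> < d 0 * (r / d 0)" by (rule mult_strict_left_mono[OF N d0])
      also have "\<dots> = r" using d0 by simp
      finally show "norm (d n - 0) < r" using pos[of n] by simp
    qed
  qed
qed



lemma armijo_local:
  fixes M :: "'a::euclidean_space set" and \<phi> :: "'a \<Rightarrow> real"
  assumes TS: "\<And>x. x \<in> M \<Longrightarrow> subspace (tangent_space M x)" and ret: "retraction M R"
    and d: "\<And>x. (\<phi> has_derivative (\<lambda>h. g x \<bullet> h)) (at x)" and cg: "continuous_on UNIV g"
    and xs: "xs \<in> M" and \<sigma>: "\<sigma> < 1" and \<delta>b: "\<delta>b > 0" and H: "H > 0"
  shows "\<exists>\<rho>0>0. \<exists>s0>0. \<forall>z\<in>M. dist z xs < \<rho>0 \<longrightarrow> norm (g z) \<le> H \<longrightarrow>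
     \<delta>b < norm (closest_point (tangent_space M z) (g z)) \<longrightarrow>
     (\<forall>s. 0 < s \<longrightarrow> s \<le> s0 \<longrightarrow>
        \<phi> (R z (s *\<^sub>R (- closest_point (tangent_space M z) (g z))))
          \<le> \<phi> z - \<sigma> * s * (norm (closest_point (tangent_space M z) (g z)))\<^sup>2)"
proof -
  define e1 where "e1 = (1 - \<sigma>) * \<delta>b / 4"
  define e2 where "e2 = min 1 ((1 - \<sigma>) * \<delta>b / (2 * (H + 1)))"
  have e1: "e1 > 0" unfolding e1_def using \<sigma> \<delta>b by simp
  have e2: "e2 > 0" "e2 \<le> 1" unfolding e2_def using \<sigma> \<delta>b H by auto
  have He2: "H * e2 \<le> (1 - \<sigma>) * \<delta>b / 2"
  proof -
    have "H * e2 \<le> H * ((1 - \<sigma>) * \<delta>b / (2 * (H + 1)))" unfolding e2_def using H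
      by (intro mult_left_mono) auto
    also have "\<dots> = ((1 - \<sigma>) * \<delta>b / 2) * (H / (H + 1))" using H by (simp add: field_simps)
    also have "\<dots> \<le> ((1 - \<sigma>) * \<delta>b / 2) * 1"
      using H \<sigma> \<delta>b by (intro mult_left_mono) auto
    finally show ?thesis by simp
  qed
  obtain \<rho>F where \<rho>F: "\<rho>F > 0" "\<forall>x y. dist x xs < \<rho>F \<longrightarrow> dist y xs < \<rho>F \<longrightarrow>
           \<phi> y - \<phi> x - g x \<bullet> (y - x) \<le> e1 * norm (y - x)"
    using fun_local[OF d cg e1, of xs] by blast
  obtain \<rho>R where \<rho>R: "\<rho>R > 0" "\<forall>x\<in>M. \<forall>v\<in>tangent_space M x. dist x xs < \<rho>R \<longrightarrow> norm v < \<rho>R \<longrightarrow>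
           norm (R x v - x - v) \<le> e2 * norm v"
    using retr_local[OF TS ret xs e2(1)] by blast
  define \<rho>0 where "\<rho>0 = min (\<rho>F / 3) \<rho>R"
  define s0 where "s0 = \<rho>0 / (H + 1)"
  have \<rho>0: "\<rho>0 > 0" "\<rho>0 \<le> \<rho>F / 3" "\<rho>0 \<le> \<rho>R" unfolding \<rho>0_def using \<rho>F \<rho>R by auto
  have s0: "s0 > 0" unfolding s0_def using \<rho>0 H by simp
  have s0H: "s0 * H < \<rho>0"
  proof -
    have "s0 * H = \<rho>0 * (H / (H + 1))" unfolding s0_def by simp
    also have "\<dots> < \<rho>0 * 1" using \<rho>0 H by (intro mult_strict_left_mono) auto
    finally show ?thesis by simp
  qed
  have main: "\<forall>z\<in>M. dist z xs < \<rho>0 \<longrightarrow> norm (g z) \<le> H \<longrightarrow>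
     \<delta>b < norm (closest_point (tangent_space M z) (g z)) \<longrightarrow>
     (\<forall>s. 0 < s \<longrightarrow> s \<le> s0 \<longrightarrow>
        \<phi> (R z (s *\<^sub>R (- closest_point (tangent_space M z) (g z))))
          \<le> \<phi> z - \<sigma> * s * (norm (closest_point (tangent_space M z) (g z)))\<^sup>2)"
  proof (intro ballI impI allI)
    fix z s assume zM: "z \<in> M" and dz: "dist z xs < \<rho>0" and gH: "norm (g z) \<le> H"
      and nP: "\<delta>b < norm (closest_point (tangent_space M z) (g z))" and s: "0 < s" "s \<le> s0"
    define T where "T = tangent_space M z"
    define P where "P = closest_point T (g z)"
    have sT: "subspace T" unfolding T_def using TS[OF zM] .
    note pf = proj_facts[OF sT, of "g z", folded P_def]
    define n where "n = norm P"
    have nb: "\<delta>b < n" using nP unfolding n_def P_def T_def .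
    have nH: "n \<le> H" using pf(3) gH unfolding n_def by linarith
    have gP: "g z \<bullet> P = n\<^sup>2"
    proof -
      have "(g z - P) \<bullet> P = 0" by (rule pf(2))
      then have "g z \<bullet> P = P \<bullet> P" by (simp add: inner_diff_left)
      then show ?thesis unfolding n_def by (simp add: power2_norm_eq_inner)
    qed
    define v where "v = s *\<^sub>R (- P)"
    have vT: "v \<in> T" unfolding v_def using sT pf(1) by (simp add: subspace_mul subspace_neg)
    define V where "V = norm v"
    have V: "V = s * n" unfolding V_def v_def n_def using s by simp
    have V0: "V \<ge> 0" unfolding V_def by simp
    have VH: "V < \<rho>0"
    proof -
      have "V \<le> s0 * H" unfolding V using s nH by (intro mult_mono) (auto simp: n_def)
      then show ?thesis using s0H by linarith
    qed
    define y where "y = R z v"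
    have hR: "norm (y - z - v) \<le> e2 * V"
      using \<rho>R(2) zM vT dz VH \<rho>0 unfolding y_def V_def T_def by auto
    have yz: "norm (y - z) \<le> 2 * V"
    proof -
      have "norm (y - z) \<le> norm (y - z - v) + norm v" using norm_triangle_ineq4[of "y - z - v" "- v"] by simp
      also have "\<dots> \<le> e2 * V + V" using hR V_def by simp
      also have "\<dots> \<le> 2 * V" using mult_right_mono[OF e2(2) V0] by simp
      finally show ?thesis .
    qed
    have dy: "dist y xs < \<rho>F"
    proof -
      have "dist y xs \<le> dist y z + dist z xs" by (rule dist_triangle)
      also have "\<dots> < 2 * \<rho>0 + \<rho>0" using yz VH dz by (simp add: dist_norm)
      finally show ?thesis using \<rho>0 by linarith
    qed
    have hF: "\<phi> y - \<phi> z - g z \<bullet> (y - z) \<le> e1 * norm (y - z)"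
      using \<rho>F(2) dz dy \<rho>0 by auto
    have split: "g z \<bullet> (y - z) = - (s * n\<^sup>2) + g z \<bullet> (y - z - v)"
      unfolding v_def using gP by (simp add: inner_diff_right inner_add_right algebra_simps)
    have cs: "g z \<bullet> (y - z - v) \<le> H * (e2 * V)"
    proof -
      have "g z \<bullet> (y - z - v) \<le> norm (g z) * norm (y - z - v)" by (rule norm_cauchy_schwarz)
      also have "\<dots> \<le> H * (e2 * V)" using gH hR H by (intro mult_mono) auto
      finally show ?thesis .
    qed
    have f1: "e1 * norm (y - z) \<le> e1 * (2 * V)" using yz e1 by (simp add: mult_left_mono)
    have f2: "H * (e2 * V) \<le> ((1 - \<sigma>) * \<delta>b / 2) * V"
      using mult_right_mono[OF He2 V0] by (simp add: mult.assoc)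
    have f3: "e1 * (2 * V) = ((1 - \<sigma>) * \<delta>b / 2) * V" unfolding e1_def by simp
    have f4: "(1 - \<sigma>) * \<delta>b * V \<le> (1 - \<sigma>) * n * V" using nb \<sigma> V0
      by (intro mult_right_mono mult_left_mono) auto
    have f5: "(1 - \<sigma>) * n * V = (1 - \<sigma>) * (s * n\<^sup>2)" unfolding V by (simp add: power2_eq_square)
    have "\<phi> y \<le> \<phi> z - \<sigma> * (s * n\<^sup>2)"
      using hF split cs f1 f2 f3 f4 f5 by (simp add: algebra_simps) linarith?
    then show "\<phi> (R z (s *\<^sub>R (- closest_point (tangent_space M z) (g z))))
          \<le> \<phi> z - \<sigma> * s * (norm (closest_point (tangent_space M z) (g z)))\<^sup>2"
      unfolding y_def v_def P_def T_def n_def by (simp add: mult.assoc)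
  qed
  show ?thesis using main \<rho>0(1) s0 by blast
qed



theorem proposition4p1:
  fixes M :: "'a::euclidean_space set"
    and f :: "'a \<Rightarrow> real" and ft :: "'a \<Rightarrow> real \<Rightarrow> real" and gradf :: "'a \<Rightarrow> real \<Rightarrow> 'a"
    and R :: "'a \<Rightarrow> 'a \<Rightarrow> 'a"
    and x0 :: 'a and \<delta>0 \<mu>0 \<beta> \<alpha> \<theta>\<delta> \<theta>\<mu> \<sigma> :: real
    and x :: "nat \<Rightarrow> 'a" and \<mu> \<delta> :: "nat \<Rightarrow> real" and \<eta> :: "nat \<Rightarrow> 'a"
  assumes "complete_riemannian_submanifold M"
    and "lsc f"
    and "smoothing_function f ft gradf"
    and "retraction M R"
    and "\<forall>\<mu>b>0. \<forall>xb\<in>M. compact {z\<in>M. ft z \<mu>b \<le> ft xb \<mu>b}"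
    and "x0 \<in> M" and "\<delta>0 > 0" and "\<mu>0 > 0" and "0 < \<beta>" and "\<beta> < 1" and "\<alpha> > 0"
    and "0 < \<theta>\<delta>" and "\<theta>\<delta> < 1" and "0 < \<theta>\<mu>" and "\<theta>\<mu> < 1" and "0 < \<sigma>" and "\<sigma> < 1"
    and "rssd_run M ft gradf R x0 0 \<delta>0 0 \<mu>0 \<beta> \<alpha> \<theta>\<delta> \<theta>\<mu> \<sigma> x \<mu> \<delta> \<eta>"
  shows "infinite {l. norm (\<eta> l) \<le> \<delta> l}
    \<and> (\<delta> \<longlongrightarrow> 0) (inf sequentially (principal {l. norm (\<eta> l) \<le> \<delta> l}))
    \<and> (\<mu> \<longlongrightarrow> 0) (inf sequentially (principal {l. norm (\<eta> l) \<le> \<delta> l}))"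
proof -
  define K where "K = {l. norm (\<eta> l) \<le> \<delta> l}"
  note run = assms(18)[unfolded rssd_run_def]
  have init: "x 0 = x0" "\<mu> 0 = \<mu>0" "\<delta> 0 = \<delta>0" using run by auto
  note st = run[THEN conjunct2, THEN conjunct2, THEN conjunct2, rule_format]
  define Arm where "Arm l m \<longleftrightarrow> ft (R (x l) ((\<beta> ^ m * \<alpha>) *\<^sub>R \<eta> l)) (\<mu> l)
                   \<le> ft (x l) (\<mu> l) - \<sigma> * (\<beta> ^ m * \<alpha>) * (norm (riem_grad M gradf (x l) (\<mu> l)))\<^sup>2" for l m
  have eta: "\<eta> l = - riem_grad M gradf (x l) (\<mu> l)" for l using st[of l] by blast
  have Kst: "\<mu> (Suc l) = \<theta>\<mu> * \<mu> l" "\<delta> (Suc l) = \<theta>\<delta> * \<delta> l" "x (Suc l) = x l" if "l \<in> K" for l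
    using st[of l] that unfolding K_def by auto
  have NKst: "\<mu> (Suc l) = \<mu> l" "\<delta> (Suc l) = \<delta> l"
    "\<exists>m. (\<forall>k<m. \<not> Arm l k) \<and> Arm l m \<and> x (Suc l) = R (x l) ((\<beta> ^ m * \<alpha>) *\<^sub>R \<eta> l)"
    if "l \<notin> K" for l
    using st[of l] that unfolding K_def Arm_def by auto
  obtain dM where "embedded_submanifold M dM" using assms(1) unfolding complete_riemannian_submanifold_def by blast
  then have TS: "subspace (tangent_space M y)" if "y \<in> M" for y using tangent_subspace that by blast
  have hsm: "(\<forall>y. ((\<lambda>z. ft z m) has_derivative (\<lambda>h. gradf y m \<bullet> h)) (at y)) \<and> continuous_on UNIV (\<lambda>y. gradf y m)"
    if "m > 0" for m
    using assms(3) that unfolding smoothing_function_def by blast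
  have rM: "R y v \<in> M" if "y \<in> M" "v \<in> tangent_space M y" for y v
    using assms(4) that unfolding retraction_def tangent_bundle_def by blast
  have pos: "\<mu> l > 0 \<and> \<delta> l > 0" for l
  proof (induction l)
    case 0 then show ?case using init assms(7,8) by simp
  next
    case (Suc l) then show ?case
      using Kst[of l] NKst[of l] assms(12,14) by (cases "l \<in> K") auto
  qed
  have etaT: "\<eta> l \<in> tangent_space M (x l)" if "x l \<in> M" for l
  proof -
    have "riem_grad M gradf (x l) (\<mu> l) \<in> tangent_space M (x l)"
      unfolding riem_grad_def by (rule proj_facts(1)[OF TS[OF that]])
    then show ?thesis using eta[of l] TS[OF that] by (simp add: subspace_neg)
  qed
  have inM: "x l \<in> M" for l
  proof (induction l)
    case 0 then show ?case using init assms(6) by simp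
  next
    case (Suc l)
    show ?case
    proof (cases "l \<in> K")
      case True then show ?thesis using Kst(3)[OF True] Suc by simp
    next
      case False
      then obtain m where "x (Suc l) = R (x l) ((\<beta> ^ m * \<alpha>) *\<^sub>R \<eta> l)" using NKst(3) by blast
      moreover have "(\<beta> ^ m * \<alpha>) *\<^sub>R \<eta> l \<in> tangent_space M (x l)"
        using etaT[OF Suc] TS[OF Suc] by (simp add: subspace_mul)
      ultimately show ?thesis using rM Suc by simp
    qed
  qed
  have Kinf: "infinite K"
  proof
    assume "finite K"
    then obtain L where L: "\<forall>l\<in>K. l < L" using finite_nat_set_iff_bounded by blast
    then have nK: "l \<notin> K" if "l \<ge> L" for l using that by force
    have cst: "\<mu> (L + k) = \<mu> L \<and> \<delta> (L + k) = \<delta> L" for k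
    proof (induction k)
      case 0 then show ?case by simp
    next
      case (Suc k) then show ?case using NKst(1,2)[OF nK[of "L + k"]] by simp
    qed
    define \<mu>b where "\<mu>b = \<mu> L"
    define \<delta>b where "\<delta>b = \<delta> L"
    have \<mu>b: "\<mu>b > 0" "\<delta>b > 0" using pos[of L] unfolding \<mu>b_def \<delta>b_def by auto
    have cst': "\<mu> l = \<mu>b \<and> \<delta> l = \<delta>b" if "l \<ge> L" for l
      using cst[of "l - L"] that unfolding \<mu>b_def \<delta>b_def by simp
    have big: "\<delta>b < norm (\<eta> l)" if "l \<ge> L" for l
      using nK[OF that] cst'[OF that] unfolding K_def by auto
    define \<phi> where "\<phi> = (\<lambda>z. ft z \<mu>b)"
    define g where "g = (\<lambda>z. gradf z \<mu>b)"
    have d\<phi>: "(\<phi> has_derivative (\<lambda>h. g y \<bullet> h)) (at y)" for y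
      using hsm[OF \<mu>b(1)] unfolding \<phi>_def g_def by blast
    have cg: "continuous_on UNIV g" using hsm[OF \<mu>b(1)] unfolding g_def by blast
    have rg: "riem_grad M gradf (x l) (\<mu> l) = closest_point (tangent_space M (x l)) (g (x l))" if "l \<ge> L" for l
      unfolding riem_grad_def g_def using cst'[OF that] by simp
    have neta: "norm (riem_grad M gradf (x l) (\<mu> l)) = norm (\<eta> l)" for l
      using eta[of l] by simp
    define mf where "mf l = (SOME m. (\<forall>k<m. \<not> Arm l k) \<and> Arm l m \<and> x (Suc l) = R (x l) ((\<beta> ^ m * \<alpha>) *\<^sub>R \<eta> l))" for l
    have mfP: "(\<forall>k<mf l. \<not> Arm l k) \<and> Arm l (mf l) \<and> x (Suc l) = R (x l) ((\<beta> ^ mf l * \<alpha>) *\<^sub>R \<eta> l)"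
      if "l \<ge> L" for l
      unfolding mf_def by (rule someI_ex[OF NKst(3)[OF nK[OF that]]])
    define tt where "tt l = \<beta> ^ mf l * \<alpha>" for l
    have ttpos: "tt l > 0" for l unfolding tt_def using assms(9,11) by simp
    have dec: "\<phi> (x (Suc l)) \<le> \<phi> (x l) - \<sigma> * tt l * (norm (\<eta> l))\<^sup>2" if "l \<ge> L" for l
      using mfP[OF that] cst'[OF that] neta[of l] unfolding Arm_def \<phi>_def tt_def by simp
    have decnn: "0 \<le> \<sigma> * tt l * (norm (\<eta> l))\<^sup>2" for l
      using ttpos[of l] assms(16) by simp
    have \<phi>le: "\<phi> (x (L + k)) \<le> \<phi> (x L)" for k
    proof (induction k)
      case 0 then show ?case by simp
    next
      case (Suc k) then show ?case using dec[of "L + k"] decnn[of "L + k"] by simp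
    qed
    define C where "C = {z\<in>M. \<phi> z \<le> \<phi> (x L)}"
    have cC: "compact C" using assms(5) \<mu>b(1) inM[of L] unfolding C_def \<phi>_def by blast
    have xC: "x (L + k) \<in> C" for k using inM \<phi>le unfolding C_def by blast
    have xLC: "x L \<in> C" using xC[of 0] by simp
    have cont\<phi>: "continuous_on C \<phi>"
      by (rule continuous_at_imp_continuous_on) (use d\<phi> has_derivative_continuous in blast)
    have "bounded (\<phi> ` C)" using compact_continuous_image[OF cont\<phi> cC] compact_imp_bounded by blast
    then obtain B where B: "\<forall>z\<in>C. \<bar>\<phi> z\<bar> \<le> B" unfolding bounded_real by blast
    have "bounded (g ` C)"
      using compact_continuous_image[OF continuous_on_subset[OF cg] cC] compact_imp_bounded by blast
    then obtain H where H: "H > 0" "\<forall>z\<in>C. norm (g z) \<le> H" unfolding bounded_pos by blast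
    define a where "a n = \<phi> (x (L + n))" for n
    have "decseq a" unfolding a_def
      by (rule decseq_SucI) (use dec decnn in \<open>smt (verit) add_Suc_right le_add1\<close>)
    moreover have "\<forall>i. - B \<le> a i" unfolding a_def using B xC by (smt (verit))
    ultimately obtain La where La: "a \<longlonglongrightarrow> La" using decseq_convergent by blast
    have diff0: "(\<lambda>n. a n - a (Suc n)) \<longlonglongrightarrow> 0"
      using tendsto_diff[OF La LIMSEQ_Suc[OF La]] by simp
    have c0: "\<sigma> * \<delta>b\<^sup>2 > 0" using assms(16) \<mu>b(2) by simp
    have ttb: "tt (L + n) \<le> (a n - a (Suc n)) / (\<sigma> * \<delta>b\<^sup>2)" for n
    proof -
      have 1: "\<sigma> * tt (L + n) * (norm (\<eta> (L + n)))\<^sup>2 \<le> a n - a (Suc n)"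
        using dec[of "L + n"] unfolding a_def by simp
      have "\<delta>b\<^sup>2 \<le> (norm (\<eta> (L + n)))\<^sup>2" using big[of "L + n"] \<mu>b(2)
        by (intro power_mono) auto
      then have 2: "\<sigma> * tt (L + n) * \<delta>b\<^sup>2 \<le> \<sigma> * tt (L + n) * (norm (\<eta> (L + n)))\<^sup>2"
        using ttpos[of "L + n"] assms(16) by (intro mult_left_mono) auto
      have "tt (L + n) * (\<sigma> * \<delta>b\<^sup>2) \<le> a n - a (Suc n)" using 1 2 by (simp add: algebra_simps)
      then show ?thesis using c0 by (simp add: le_divide_eq)
    qed
    have ttL: "(\<lambda>n. tt (L + n)) \<longlonglongrightarrow> 0"
    proof (rule tendsto_sandwich[of "\<lambda>n. 0" _ sequentially "\<lambda>n. (a n - a (Suc n)) / (\<sigma> * \<delta>b\<^sup>2)"])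
      show "\<forall>\<^sub>F n in sequentially. 0 \<le> tt (L + n)" using ttpos by (simp add: less_imp_le)
      show "\<forall>\<^sub>F n in sequentially. tt (L + n) \<le> (a n - a (Suc n)) / (\<sigma> * \<delta>b\<^sup>2)" using ttb by simp
      show "(\<lambda>n. 0) \<longlonglongrightarrow> (0::real)" by simp
      show "(\<lambda>n. (a n - a (Suc n)) / (\<sigma> * \<delta>b\<^sup>2)) \<longlonglongrightarrow> 0"
        using tendsto_divide_zero[OF diff0] by simp
    qed
    have "seq_compact C" using cC compact_imp_seq_compact by blast
    then obtain xs r where xs: "xs \<in> C" "strict_mono r" "((\<lambda>n. x (L + n)) \<circ> r) \<longlonglongrightarrow> xs"
      using seq_compactE[of C "\<lambda>n. x (L + n)"] xC by blast
    have xsM: "xs \<in> M" using xs(1) unfolding C_def by blast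
    obtain \<rho>0 s0 where \<rho>0: "\<rho>0 > 0" "s0 > 0" and loc: "\<forall>z\<in>M. dist z xs < \<rho>0 \<longrightarrow> norm (g z) \<le> H \<longrightarrow>
     \<delta>b < norm (closest_point (tangent_space M z) (g z)) \<longrightarrow>
     (\<forall>s. 0 < s \<longrightarrow> s \<le> s0 \<longrightarrow>
        \<phi> (R z (s *\<^sub>R (- closest_point (tangent_space M z) (g z))))
          \<le> \<phi> z - \<sigma> * s * (norm (closest_point (tangent_space M z) (g z)))\<^sup>2)"
      using armijo_local[OF TS assms(4) d\<phi> cg xsM assms(17) \<mu>b(2) H(1)] by blast
    have ev1: "eventually (\<lambda>j. dist (x (L + r j)) xs < \<rho>0) sequentially"
      using tendstoD[OF xs(3) \<rho>0(1)] by simp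
    have "(\<lambda>j. tt (L + r j)) \<longlonglongrightarrow> 0"
      using LIMSEQ_subseq_LIMSEQ[OF ttL xs(2)] by (simp add: o_def)
    moreover have cpos: "min \<alpha> (\<beta> * s0) > 0" using assms(9,11) \<rho>0 by simp
    ultimately have ev2: "eventually (\<lambda>j. tt (L + r j) < min \<alpha> (\<beta> * s0)) sequentially"
      using order_tendstoD(2) by blast
    obtain N where N: "\<forall>j\<ge>N. dist (x (L + r j)) xs < \<rho>0 \<and> tt (L + r j) < min \<alpha> (\<beta> * s0)"
      using eventually_conj[OF ev1 ev2] unfolding eventually_sequentially by blast
    define l where "l = L + r N"
    have lL: "l \<ge> L" unfolding l_def by simp
    have dl: "dist (x l) xs < \<rho>0" and tl: "tt l < min \<alpha> (\<beta> * s0)" using N unfolding l_def by auto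
    have "mf l \<noteq> 0"
    proof
      assume "mf l = 0"
      then have "tt l = \<alpha>" unfolding tt_def by simp
      then show False using tl by simp
    qed
    then obtain k where k: "mf l = Suc k" using not0_implies_Suc by blast
    have notArm: "\<not> Arm l k" using mfP[OF lL] k by simp
    define s where "s = \<beta> ^ k * \<alpha>"
    have spos: "s > 0" unfolding s_def using assms(9,11) by simp
    have tts: "tt l = \<beta> * s" unfolding tt_def s_def k by simp
    have "\<beta> * s < \<beta> * s0" using tl tts by simp
    then have ss0: "s \<le> s0" using assms(9) by simp
    have xlM: "x l \<in> M" by (rule inM)
    have gH: "norm (g (x l)) \<le> H" using H(2) xC[of "r N"] unfolding l_def by simp
    have nb: "\<delta>b < norm (closest_point (tangent_space M (x l)) (g (x l)))"
      using big[OF lL] neta[of l] rg[OF lL] by simp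
    have "\<phi> (R (x l) (s *\<^sub>R (- closest_point (tangent_space M (x l)) (g (x l)))))
          \<le> \<phi> (x l) - \<sigma> * s * (norm (closest_point (tangent_space M (x l)) (g (x l))))\<^sup>2"
      using loc xlM dl gH nb spos ss0 by blast
    then have "Arm l k"
      unfolding Arm_def using eta[of l] rg[OF lL] cst'[OF lL] unfolding \<phi>_def s_def by simp
    then show False using notArm by simp
  qed
  have "\<delta> \<longlonglongrightarrow> 0"
    by (rule shrink_to_zero[OF Kinf assms(12,13)]) (use pos Kst NKst in auto)
  moreover have "\<mu> \<longlonglongrightarrow> 0"
    by (rule shrink_to_zero[OF Kinf assms(14,15)]) (use pos Kst NKst in auto)
  ultimately show ?thesis
    using Kinf unfolding K_def by (auto intro: tendsto_mono[OF inf_le1])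
qed


end
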